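(* Fix $n\ge 1$, the shape $\lambda=n^2=(n,n)$, and a density $\rho$ with positive entries $\rho_{1,j}=a_j$, $\rho_{2,j}=b_j$; let $a=\sum_j a_j$, $b=\sum_j b_j$. Let $P_1,P_2\in\mathcal{P}$ with $P_1\ge P_2$. If $P_1\in\operatorname{im}(\psi_\rho)$, then $P_2\in\operatorname{im}(\psi_\rho)$.
   Context: A density on a shape $\lambda$ is an assignment of a nonnegative integer $\rho_{i,j}$ to every cell $(i,j)$ (row $i$, column $j$); let $N=\sum\rho_{i,j}$. A standard set-valued Young tableau of shape $\lambda$ and density $\rho$ assigns to each cell $(i,j)$ a set $S_{i,j}$ with $|S_{i,j}|=\rho_{i,j}$, the sets partitioning $[N]$, such that every element of $S_{i,j}$ is smaller than every element of $S_{i,j+1}$ and of $S_{i+1,j}$ whenever those cells exist. $\mathrm{SVT}(\lambda,\rho)$ is the set of these tableaux. $\mathcal{P}$ is the set of lattice paths from $(0,0)$ to $(a,b)$ using steps $E=(1,0)$ and $N=(0,1)$, written as words in $E,N$. The map $\psi_\rho:\mathrm{SVT}(\lambda,\rho)\to\mathcal{P}$ sends $T$ to the word whose $m$-th letter ($1\le m\le a+b$) is $E$ if $m$ lies in the first row of $T$ and $N$ if $m$ lies in the second row. For $P_1,P_2\in\mathcal{P}$, $P_1\ge P_2$ means $P_1$ lies weakly above $P_2$ over $0\le x\le a$. *)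

theory Defs
  imports Main
begin

datatype step = E | N

definition cells2 :: "nat \<Rightarrow> (nat \<times> nat) set" where
  "cells2 n = {1,2} \<times> {1..n}"

definition dsize :: "nat \<Rightarrow> (nat \<Rightarrow> nat \<Rightarrow> nat) \<Rightarrow> nat" where
  "dsize n \<rho> = (\<Sum>(i,j)\<in>cells2 n. \<rho> i j)"

definition SVT2 :: "nat \<Rightarrow> (nat \<Rightarrow> nat \<Rightarrow> nat) \<Rightarrow> (nat \<Rightarrow> nat \<Rightarrow> nat set) set" where
  "SVT2 n \<rho> = {T.
     (\<forall>i j. (i,j) \<notin> cells2 n \<longrightarrow> T i j = {}) \<and>
     (\<forall>(i,j)\<in>cells2 n. finite (T i j) \<and> card (T i j) = \<rho> i j) \<and>
     (\<forall>c\<in>cells2 n. \<forall>d\<in>cells2 n. c \<noteq> d \<longrightarrow>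
         T (fst c) (snd c) \<inter> T (fst d) (snd d) = {}) \<and>
     (\<Union>(i,j)\<in>cells2 n. T i j) = {1..dsize n \<rho>} \<and>
     (\<forall>(i,j)\<in>cells2 n. (i, j+1) \<in> cells2 n \<longrightarrow>
         (\<forall>x\<in>T i j. \<forall>y\<in>T i (j+1). x < y)) \<and>
     (\<forall>(i,j)\<in>cells2 n. (i+1, j) \<in> cells2 n \<longrightarrow>
         (\<forall>x\<in>T i j. \<forall>y\<in>T (i+1) j. x < y))}"

text \<open>Lattice paths from (0,0) to (a,b) with steps E=(1,0), N=(0,1), as words.\<close>
definition paths :: "nat \<Rightarrow> nat \<Rightarrow> step list set" where
  "paths a b = {w. length w = a + b \<and> count_list w E = a \<and> count_list w N = b}"

definition path_points :: "step list \<Rightarrow> (nat \<times> nat) set" where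
  "path_points w = {(count_list (take k w) E, count_list (take k w) N) | k. k \<le> length w}"

definition weakly_above :: "nat \<Rightarrow> step list \<Rightarrow> step list \<Rightarrow> bool" where
  "weakly_above a P1 P2 = (\<forall>x\<le>a.
     Min {y. (x,y) \<in> path_points P2} \<le> Min {y. (x,y) \<in> path_points P1})"

definition psi :: "nat \<Rightarrow> nat \<Rightarrow> (nat \<Rightarrow> nat \<Rightarrow> nat set) \<Rightarrow> step list" where
  "psi n len T = map (\<lambda>m. if (\<exists>j\<in>{1..n}. m \<in> T 1 j) then E else N) [1..<len + 1]"

end

theory Submission
  imports Defs
begin


definition cnt :: "step \<Rightarrow> step list \<Rightarrow> nat \<Rightarrow> nat" where
  "cnt s w k = count_list (take k w) s"

definition Acc :: "(nat \<Rightarrow> nat \<Rightarrow> nat) \<Rightarrow> nat \<Rightarrow> nat \<Rightarrow> nat" where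
  "Acc \<rho> i j = (\<Sum>t=1..j. \<rho> i t)"

definition Cond :: "nat \<Rightarrow> (nat \<Rightarrow> nat \<Rightarrow> nat) \<Rightarrow> step list \<Rightarrow> bool" where
  "Cond n \<rho> w = (\<forall>k\<le>length w. \<forall>j\<in>{1..n}.
      Acc \<rho> 2 (j-1) < cnt N w k \<longrightarrow> Acc \<rho> 1 j \<le> cnt E w k)"

definition blk :: "step \<Rightarrow> step list \<Rightarrow> nat \<Rightarrow> nat \<Rightarrow> nat set" where
  "blk s w lo hi = {m\<in>{1..length w}. w!(m-1) = s \<and> lo < cnt s w m \<and> cnt s w m \<le> hi}"

lemma cells2_iff: "(i,j) \<in> cells2 n \<longleftrightarrow> (i = 1 \<or> i = 2) \<and> 1 \<le> j \<and> j \<le> n"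
  by (auto simp: cells2_def)

lemma Acc_0[simp]: "Acc \<rho> i 0 = 0" by (simp add: Acc_def)
lemma Acc_Suc: "Acc \<rho> i (Suc j) = Acc \<rho> i j + \<rho> i (Suc j)"
  by (simp add: Acc_def)
lemma Acc_mono: "j \<le> j' \<Longrightarrow> Acc \<rho> i j \<le> Acc \<rho> i j'"
  unfolding Acc_def by (rule sum_mono2) auto

lemma cnt_0[simp]: "cnt s w 0 = 0" by (simp add: cnt_def)

lemma cnt_Suc: "k < length w \<Longrightarrow> cnt s w (Suc k) = cnt s w k + (if w!k = s then 1 else 0)"
  by (simp add: cnt_def take_Suc_conv_app_nth)

lemma cnt_mono: "k \<le> k' \<Longrightarrow> cnt s w k \<le> cnt s w k'"
proof -
  assume "k \<le> k'"
  then obtain d where "k' = k + d" using le_Suc_ex by blast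
  then show ?thesis by (simp add: cnt_def take_add)
qed

lemma cnt_le: "cnt s w k \<le> count_list w s"
proof -
  have "count_list w s = count_list (take k w @ drop k w) s" by simp
  also have "\<dots> = cnt s w k + count_list (drop k w) s" by (simp only: count_list_append cnt_def)
  finally show ?thesis by simp
qed

lemma cnt_len[simp]: "cnt s w (length w) = count_list w s" by (simp add: cnt_def)

lemma cnt_ivt: "x \<le> count_list w s \<Longrightarrow> \<exists>k\<le>length w. cnt s w k = x"
proof (induction w arbitrary: x)
  case Nil then show ?case by (auto simp: cnt_def)
next
  case (Cons c w)
  show ?case
  proof (cases "x = 0")
    case True then show ?thesis by (intro exI[of _ 0]) simp
  next
    case False
    show ?thesis
    proof (cases "c = s")
      case True
      with Cons.prems False have "x - 1 \<le> count_list w s" by auto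
      then obtain k where "k \<le> length w" "cnt s w k = x - 1" using Cons.IH by blast
      then show ?thesis using True False by (intro exI[of _ "Suc k"]) (auto simp: cnt_def)
    next
      case f: False
      with Cons.prems have "x \<le> count_list w s" by auto
      then obtain k where "k \<le> length w" "cnt s w k = x" using Cons.IH by blast
      then show ?thesis using f by (intro exI[of _ "Suc k"]) (auto simp: cnt_def)
    qed
  qed
qed

lemma cnt_step: "1 \<le> m \<Longrightarrow> m \<le> length w \<Longrightarrow> w!(m-1) = s \<Longrightarrow> cnt s w m = Suc (cnt s w (m-1))"
  using cnt_Suc[of "m-1" w s] by simp

lemma cnt_strict:
  assumes "1 \<le> m" "m' \<le> length w" "w!(m'-1) = s" "m < m'"
  shows "cnt s w m < cnt s w m'"
proof -
  have "cnt s w m \<le> cnt s w (m'-1)" using assms by (intro cnt_mono) auto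
  also have "\<dots> < cnt s w m'" using cnt_step[of m' w s] assms by simp
  finally show ?thesis .
qed

lemma cnt_bij: "bij_betw (cnt s w) {m\<in>{1..length w}. w!(m-1)=s} {1..count_list w s}"
  unfolding bij_betw_def
proof
  show "inj_on (cnt s w) {m\<in>{1..length w}. w!(m-1)=s}"
  proof (rule inj_onI)
    fix x y assume x: "x \<in> {m\<in>{1..length w}. w!(m-1)=s}" and y: "y \<in> {m\<in>{1..length w}. w!(m-1)=s}"
      and e: "cnt s w x = cnt s w y"
    show "x = y"
    proof (rule ccontr)
      assume "x \<noteq> y"
      then consider "x < y" | "y < x" by linarith
      then show False
        using cnt_strict[where m=x and m'=y and w=w and s=s] cnt_strict[where m=y and m'=x and w=w and s=s] x y e by auto
    qed
  qed
  show "cnt s w ` {m\<in>{1..length w}. w!(m-1)=s} = {1..count_list w s}"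
  proof
    show "cnt s w ` {m\<in>{1..length w}. w!(m-1)=s} \<subseteq> {1..count_list w s}"
      using cnt_step cnt_le by fastforce
    show "{1..count_list w s} \<subseteq> cnt s w ` {m\<in>{1..length w}. w!(m-1)=s}"
    proof
      fix v assume v: "v \<in> {1..count_list w s}"
      then obtain k where k: "k \<le> length w" "cnt s w k = v" using cnt_ivt by (meson atLeastAtMost_iff)
      define k0 where "k0 = (LEAST k. cnt s w k = v)"
      have k0: "cnt s w k0 = v" unfolding k0_def by (rule LeastI[of _ k]) (rule k(2))
      have "k0 \<le> k" unfolding k0_def by (rule Least_le) (rule k(2))
      then have k0le: "k0 \<le> length w" using k(1) by simp
      have "k0 \<noteq> 0" using k0 v by (cases k0) auto
      have "cnt s w (k0 - 1) \<noteq> v" unfolding k0_def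
        by (rule not_less_Least) (use \<open>k0 \<noteq> 0\<close> in \<open>simp add: k0_def[symmetric]\<close>)
      with cnt_Suc[of "k0-1" w s] \<open>k0 \<noteq> 0\<close> k0le k0 have "w!(k0-1) = s"
        by (cases "w!(k0-1) = s") auto
      then show "v \<in> cnt s w ` {m\<in>{1..length w}. w!(m-1)=s}"
        using k0 k0le \<open>k0 \<noteq> 0\<close> by (intro image_eqI[of _ _ k0]) auto
    qed
  qed
qed

lemma blk_card:
  assumes "hi \<le> count_list w s"
  shows "card (blk s w lo hi) = hi - lo"
proof -
  have sub: "blk s w lo hi \<subseteq> {m\<in>{1..length w}. w!(m-1)=s}" by (auto simp: blk_def)
  have img: "cnt s w ` blk s w lo hi = {lo<..hi}"
  proof
    show "cnt s w ` blk s w lo hi \<subseteq> {lo<..hi}" by (auto simp: blk_def)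
    show "{lo<..hi} \<subseteq> cnt s w ` blk s w lo hi"
    proof
      fix v assume v: "v \<in> {lo<..hi}"
      then have "v \<in> {1..count_list w s}" using assms by auto
      then obtain m where "m \<in> {m\<in>{1..length w}. w!(m-1)=s}" "v = cnt s w m"
        using cnt_bij[of s w] unfolding bij_betw_def by blast
      then show "v \<in> cnt s w ` blk s w lo hi" using v by (auto simp: blk_def)
    qed
  qed
  have "bij_betw (cnt s w) (blk s w lo hi) {lo<..hi}"
    by (rule bij_betw_subset[OF cnt_bij sub img])
  then show ?thesis by (simp add: bij_betw_same_card)
qed

lemma blk_fin: "finite (blk s w lo hi)" by (auto simp: blk_def)

lemma blk_ord: "m \<in> blk s w lo hi \<Longrightarrow> m' \<in> blk s w lo' hi' \<Longrightarrow> hi \<le> lo' \<Longrightarrow> m < m'"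
  unfolding blk_def using cnt_mono[of m' m s w] by (auto simp: not_less[symmetric])

lemma blk_exists:
  assumes "m \<in> {1..length w}" "w!(m-1) = s" "count_list w s = Acc \<rho> i n"
  shows "\<exists>j\<in>{1..n}. m \<in> blk s w (Acc \<rho> i (j-1)) (Acc \<rho> i j)"
proof -
  let ?v = "cnt s w m"
  have v1: "?v \<ge> 1" using cnt_step[of m w s] assms by auto
  have vn: "?v \<le> Acc \<rho> i n" using cnt_le[of s w m] assms by simp
  define j where "j = (LEAST j. ?v \<le> Acc \<rho> i j)"
  have j: "?v \<le> Acc \<rho> i j" unfolding j_def by (rule LeastI[of _ n]) (rule vn)
  have jn: "j \<le> n" unfolding j_def using vn by (rule Least_le)
  have j0: "j \<noteq> 0" using j v1 by (cases j) auto
  have "\<not> ?v \<le> Acc \<rho> i (j-1)" unfolding j_def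
    by (rule not_less_Least) (use j0 in \<open>simp add: j_def[symmetric]\<close>)
  then show ?thesis using j jn j0 assms by (intro bexI[of _ j]) (auto simp: blk_def)
qed



lemma pts_iff: "(x,y) \<in> path_points w \<longleftrightarrow> (\<exists>k\<le>length w. cnt E w k = x \<and> cnt N w k = y)"
  by (auto simp: path_points_def cnt_def)

lemma transfer:
  assumes P1: "P1 \<in> paths a b" and P2: "P2 \<in> paths a b" and wa: "weakly_above a P1 P2"
    and c1: "Cond n \<rho> P1" and A: "Acc \<rho> 1 n = a"
  shows "Cond n \<rho> P2"
  unfolding Cond_def
proof (intro allI impI ballI)
  fix k j assume k: "k \<le> length P2" and j: "j \<in> {1..n}" and h: "Acc \<rho> 2 (j-1) < cnt N P2 k"
  show "Acc \<rho> 1 j \<le> cnt E P2 k"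
  proof (rule ccontr)
    assume nt: "\<not> Acc \<rho> 1 j \<le> cnt E P2 k"
    define x where "x = cnt E P2 k"
    have xl: "x < Acc \<rho> 1 j" using nt x_def by simp
    have "Acc \<rho> 1 j \<le> a" using Acc_mono[of j n \<rho> 1] j A by simp
    then have xa: "x + 1 \<le> a" using xl by simp
    define S1 where "S1 = {y. (x+1,y) \<in> path_points P1}"
    define S2 where "S2 = {y. (x+1,y) \<in> path_points P2}"
    have "Min S2 \<le> Min S1" using wa xa unfolding weakly_above_def S1_def S2_def by blast
    have fin: "finite {y. (x',y) \<in> path_points w}" for x' w
    proof -
      have "{y. (x',y) \<in> path_points w} \<subseteq> cnt N w ` {0..length w}" by (auto simp: pts_iff)
      then show ?thesis by (rule finite_subset) simp
    qed
    obtain k2 where k2: "k2 \<le> length P2" "cnt E P2 k2 = x + 1"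
      using cnt_ivt[of "x+1" P2 E] xa P2 by (auto simp: paths_def)
    have "S2 \<noteq> {}" using k2 by (auto simp: S2_def pts_iff)
    moreover have "\<forall>y\<in>S2. cnt N P2 k \<le> y"
    proof
      fix y assume "y \<in> S2"
      then obtain k' where k': "k' \<le> length P2" "cnt E P2 k' = x+1" "cnt N P2 k' = y"
        by (auto simp: S2_def pts_iff)
      have "\<not> k' \<le> k" using cnt_mono[of k' k E P2] k' x_def by auto
      then show "cnt N P2 k \<le> y" using cnt_mono[of k k' N P2] k' by simp
    qed
    ultimately have "cnt N P2 k \<le> Min S2" using fin[of "x+1" P2] unfolding S2_def by auto
    with \<open>Min S2 \<le> Min S1\<close> h have hS1: "Acc \<rho> 2 (j-1) < Min S1" by simp
    obtain k1 where k1: "k1 \<le> length P1" "cnt E P1 k1 = x + 1"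
      using cnt_ivt[of "x+1" P1 E] xa P1 by (auto simp: paths_def)
    define k0 where "k0 = (LEAST k. cnt E P1 k = x + 1)"
    have k0: "cnt E P1 k0 = x + 1" unfolding k0_def by (rule LeastI[of _ k1]) (rule k1(2))
    have "k0 \<le> k1" unfolding k0_def by (rule Least_le) (rule k1(2))
    then have k0le: "k0 \<le> length P1" using k1 by simp
    have "cnt N P1 k0 \<in> S1" using k0 k0le by (auto simp: S1_def pts_iff)
    then have "Min S1 \<le> cnt N P1 k0" using fin[of "x+1" P1] unfolding S1_def by auto
    with hS1 have hk0: "Acc \<rho> 2 (j-1) < cnt N P1 k0" by simp
    have "k0 \<noteq> 0" using k0 by (cases k0) auto
    have lt: "k0 - 1 < (LEAST k. cnt E P1 k = x + 1)" using \<open>k0 \<noteq> 0\<close> k0_def by simp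
    have "cnt E P1 (k0 - 1) \<noteq> x + 1" using not_less_Least[OF lt] by simp
    with cnt_Suc[of "k0-1" P1 E] \<open>k0 \<noteq> 0\<close> k0le k0 have "P1!(k0-1) = E"
      by (cases "P1!(k0-1) = E") auto
    moreover have sk: "Suc (k0-1) = k0" using \<open>k0 \<noteq> 0\<close> by simp
    moreover have "k0 - 1 < length P1" using \<open>k0 \<noteq> 0\<close> k0le by simp
    ultimately have e1: "cnt E P1 (k0-1) = x" and n1: "cnt N P1 (k0-1) = cnt N P1 k0"
      using cnt_Suc[of "k0-1" P1 E] cnt_Suc[of "k0-1" P1 N] k0 by auto
    have "Acc \<rho> 1 j \<le> cnt E P1 (k0-1)"
      using c1 k0le j hk0 n1 unfolding Cond_def by auto
    with e1 xl show False by simp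
  qed
qed



lemma dsize_eq: "dsize n \<rho> = Acc \<rho> 1 n + Acc \<rho> 2 n"
proof -
  have "dsize n \<rho> = (\<Sum>i\<in>{1,2::nat}. \<Sum>j=1..n. \<rho> i j)"
    unfolding dsize_def cells2_def by (simp add: sum.cartesian_product)
  then show ?thesis by (simp add: Acc_def)
qed

lemma count_map_upt: "count_list (map f [1..<k+1]) s = card {m\<in>{1..k}. f m = s}"
proof (induction k)
  case 0 then show ?case by simp
next
  case (Suc k)
  have "{m\<in>{1..Suc k}. f m = s} = {m\<in>{1..k}. f m = s} \<union> (if f (Suc k) = s then {Suc k} else {})"
    by (cases "f (Suc k) = s") (auto simp: le_Suc_eq)
  then show ?case using Suc by auto
qed

lemma cnt_psi: "k \<le> L \<Longrightarrow> cnt s (map f [1..<L+1]) k = card {m\<in>{1..k}. f m = s}"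
proof -
  assume "k \<le> L"
  then have "take k [1..<L+1] = [1..<1+k]" by (intro take_upt) simp
  then have "take k [1..<L+1] = [1..<k+1]" by (simp only: add.commute)
  then show ?thesis by (simp only: cnt_def take_map count_map_upt)
qed

lemma partA:
  assumes T: "T \<in> SVT2 n \<rho>" and pos: "\<forall>j\<in>{1..n}. \<rho> 1 j > 0 \<and> \<rho> 2 j > 0"
  shows "Cond n \<rho> (psi n (dsize n \<rho>) T)"
proof -
  let ?L = "dsize n \<rho>"
  note S = T[unfolded SVT2_def mem_Collect_eq]
  have out: "\<And>i j. (i,j) \<notin> cells2 n \<Longrightarrow> T i j = {}" using conjunct1[OF S] by blast
  have S2: "\<forall>(i,j)\<in>cells2 n. finite (T i j) \<and> card (T i j) = \<rho> i j" using S by (elim conjE)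
  have S3: "\<forall>c\<in>cells2 n. \<forall>d\<in>cells2 n. c \<noteq> d \<longrightarrow>
         T (fst c) (snd c) \<inter> T (fst d) (snd d) = {}" using S by (elim conjE)
  have un: "(\<Union>(i,j)\<in>cells2 n. T i j) = {1..dsize n \<rho>}" using S by (elim conjE)
  have S5: "\<forall>(i,j)\<in>cells2 n. (i, j+1) \<in> cells2 n \<longrightarrow>
         (\<forall>x\<in>T i j. \<forall>y\<in>T i (j+1). x < y)" using S by (elim conjE)
  have S6: "\<forall>(i,j)\<in>cells2 n. (i+1, j) \<in> cells2 n \<longrightarrow>
         (\<forall>x\<in>T i j. \<forall>y\<in>T (i+1) j. x < y)" using S by (elim conjE)
  have fin: "\<And>i j. finite (T i j)"
  proof -
    fix i j show "finite (T i j)"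
      using bspec[OF S2, of "(i,j)"] out[of i j] by (cases "(i,j) \<in> cells2 n") auto
  qed
  have crd: "\<And>i j. (i,j) \<in> cells2 n \<Longrightarrow> card (T i j) = \<rho> i j"
    using S2 by auto
  have disj: "\<And>i j i' j'. (i,j)\<in>cells2 n \<Longrightarrow> (i',j')\<in>cells2 n \<Longrightarrow> (i,j)\<noteq>(i',j') \<Longrightarrow> T i j \<inter> T i' j' = {}"
  proof -
    fix i j i' j' assume a: "(i,j)\<in>cells2 n" "(i',j')\<in>cells2 n" "(i,j)\<noteq>(i',j')"
    show "T i j \<inter> T i' j' = {}" using bspec[OF bspec[OF S3 a(1)] a(2)] a(3) by simp
  qed
  have row: "\<And>j x y. (1,j)\<in>cells2 n \<Longrightarrow> (1,j+1)\<in>cells2 n \<Longrightarrow> x\<in>T 1 j \<Longrightarrow> y \<in> T 1 (j+1) \<Longrightarrow> x<y"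
  proof -
    fix j x y assume a: "(1,j)\<in>cells2 n" "(1,j+1)\<in>cells2 n" "x\<in>T 1 j" "y \<in> T 1 (j+1)"
    show "x < y" using bspec[OF S5 a(1)] a(2-4) by simp
  qed
  have col: "\<And>j x y. (1,j)\<in>cells2 n \<Longrightarrow> (2,j)\<in>cells2 n \<Longrightarrow> x \<in> T 1 j \<Longrightarrow> y \<in> T 2 j \<Longrightarrow> x < y"
  proof -
    fix j x y assume a: "(1,j)\<in>cells2 n" "(2,j)\<in>cells2 n" "x \<in> T 1 j" "y \<in> T 2 j"
    show "x < y" using bspec[OF S6 a(1)] a(2-4) by (simp add: numeral_2_eq_2)
  qed
  have ord: "x \<in> T 1 i \<Longrightarrow> y \<in> T 2 (i+d) \<Longrightarrow> 1 \<le> i \<Longrightarrow> i + d \<le> n \<Longrightarrow> x < y" for d i x y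
  proof (induction d arbitrary: i x)
    case 0 then show ?case using col[of i x y] by (simp add: cells2_iff)
  next
    case (Suc d)
    have c: "(1, i+1) \<in> cells2 n" using Suc.prems by (simp add: cells2_iff)
    then have "card (T 1 (i+1)) > 0" using crd pos Suc.prems by auto
    then obtain z where z: "z \<in> T 1 (i+1)" by (metis card_gt_0_iff ex_in_conv)
    have "x < z" using row[of i x z] Suc.prems z c by (simp add: cells2_iff)
    moreover have "z < y" using Suc.IH[of z "i+1"] z Suc.prems by simp
    ultimately show ?case by simp
  qed
  define R1 where "R1 m = (\<exists>j\<in>{1..n}. m \<in> T 1 j)" for m
  have psi_eq: "psi n ?L T = map (\<lambda>m. if R1 m then E else N) [1..<?L+1]"
    by (simp add: psi_def R1_def)
  show ?thesis
    unfolding Cond_def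
  proof (intro allI impI ballI)
    fix k j assume k: "k \<le> length (psi n ?L T)" and j: "j \<in> {1..n}"
      and h: "Acc \<rho> 2 (j-1) < cnt N (psi n ?L T) k"
    have kL: "k \<le> ?L" using k by (simp add: psi_def del: upt_Suc)
    have cN: "cnt N (psi n ?L T) k = card {m\<in>{1..k}. \<not> R1 m}"
    proof -
      have "{m\<in>{1..k}. (if R1 m then E else N) = N} = {m\<in>{1..k}. \<not> R1 m}" by auto
      then show ?thesis unfolding psi_eq using cnt_psi[OF kL, of N "\<lambda>m. if R1 m then E else N"]
        by (simp only:)
    qed
    have cE: "cnt E (psi n ?L T) k = card {m\<in>{1..k}. R1 m}"
    proof -
      have "{m\<in>{1..k}. (if R1 m then E else N) = E} = {m\<in>{1..k}. R1 m}" by auto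
      then show ?thesis unfolding psi_eq using cnt_psi[OF kL, of E "\<lambda>m. if R1 m then E else N"]
        by (simp only:)
    qed
    obtain m j' where m: "m \<in> {1..k}" "j \<le> j'" "j' \<le> n" "m \<in> T 2 j'"
    proof -
      have "\<exists>m j'. m \<in> {1..k} \<and> j \<le> j' \<and> j' \<le> n \<and> m \<in> T 2 j'"
      proof (rule ccontr)
        assume H: "\<not> ?thesis"
        have "{m\<in>{1..k}. \<not> R1 m} \<subseteq> (\<Union>i\<in>{1..j-1}. T 2 i)"
        proof
          fix m assume m: "m \<in> {m\<in>{1..k}. \<not> R1 m}"
          then have "m \<in> {1..?L}" using kL by auto
          then have "m \<in> (\<Union>(i,j)\<in>cells2 n. T i j)" using un by simp
          then obtain c where "c \<in> cells2 n" "m \<in> T (fst c) (snd c)" by (auto simp: case_prod_beta)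
          then obtain i' j'' where c: "(i',j'') \<in> cells2 n" "m \<in> T i' j''" by (cases c) auto
          show "m \<in> (\<Union>i\<in>{1..j-1}. T 2 i)"
          proof (cases "i' = 1")
            case True then show ?thesis using c m by (auto simp: R1_def cells2_iff)
          next
            case False
            then have "i' = 2" using c by (simp add: cells2_iff)
            then have "\<not> j \<le> j''" using H c m by (auto simp: cells2_iff)
            then show ?thesis using c \<open>i' = 2\<close> by (auto simp: cells2_iff)
          qed
        qed
        then have "card {m\<in>{1..k}. \<not> R1 m} \<le> card (\<Union>i\<in>{1..j-1}. T 2 i)"
          by (rule card_mono[rotated]) (simp add: fin)
        also have "\<dots> \<le> (\<Sum>i\<in>{1..j-1}. card (T 2 i))" by (rule card_UN_le) simp
        also have "\<dots> = (\<Sum>i\<in>{1..j-1}. \<rho> 2 i)"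
          by (rule sum.cong) (use j in \<open>auto simp: crd cells2_iff\<close>)
        also have "\<dots> = Acc \<rho> 2 (j-1)" by (simp add: Acc_def)
        finally show False using h cN by simp
      qed
      then show ?thesis using that by blast
    qed
    have sub: "(\<Union>i\<in>{1..j}. T 1 i) \<subseteq> {m'\<in>{1..k}. R1 m'}"
    proof
      fix x assume "x \<in> (\<Union>i\<in>{1..j}. T 1 i)"
      then obtain i where i: "i \<in> {1..j}" "x \<in> T 1 i" by auto
      have "x < m" using ord[of x i m "j' - i"] i m by auto
      moreover have "(1,i) \<in> cells2 n" using i j by (auto simp: cells2_iff)
      then have "x \<in> {1..?L}" using un i by blast
      moreover have "R1 x" using i j by (auto simp: R1_def)
      ultimately show "x \<in> {m'\<in>{1..k}. R1 m'}" using m by auto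
    qed
    have "Acc \<rho> 1 j = (\<Sum>i\<in>{1..j}. card (T 1 i))"
      unfolding Acc_def by (rule sum.cong) (use j in \<open>auto simp: crd cells2_iff\<close>)
    also have "\<dots> = card (\<Union>i\<in>{1..j}. T 1 i)"
    proof -
      have "\<forall>i\<in>{1..j}. \<forall>i'\<in>{1..j}. i \<noteq> i' \<longrightarrow> T 1 i \<inter> T 1 i' = {}"
        using j by (intro ballI impI disj) (auto simp: cells2_iff)
      then show ?thesis by (intro card_UN_disjoint[symmetric]) (auto simp: fin)
    qed
    also have "\<dots> \<le> card {m'\<in>{1..k}. R1 m'}" by (rule card_mono[OF _ sub]) simp
    finally show "Acc \<rho> 1 j \<le> cnt E (psi n ?L T) k" using cE by simp
  qed
qed



definition lt :: "nat \<Rightarrow> step" where "lt i = (if i = 1 then E else N)"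

definition mkT :: "nat \<Rightarrow> (nat \<Rightarrow> nat \<Rightarrow> nat) \<Rightarrow> step list \<Rightarrow> nat \<Rightarrow> nat \<Rightarrow> nat set" where
  "mkT n \<rho> w i j = (if (i,j) \<in> cells2 n then blk (lt i) w (Acc \<rho> i (j-1)) (Acc \<rho> i j) else {})"

lemma partB:
  assumes w: "w \<in> paths a b" and a: "a = Acc \<rho> 1 n" and b: "b = Acc \<rho> 2 n"
    and c: "Cond n \<rho> w"
  shows "mkT n \<rho> w \<in> SVT2 n \<rho> \<and> psi n (a+b) (mkT n \<rho> w) = w"
proof -
  let ?T = "mkT n \<rho> w"
  have len: "length w = a + b" and ca: "count_list w E = a" and cb: "count_list w N = b"
    using w by (auto simp: paths_def)
  have ds: "dsize n \<rho> = a + b" using a b by (simp add: dsize_eq)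
  have cnt_lt: "i \<in> {1,2} \<Longrightarrow> count_list w (lt i) = Acc \<rho> i n" for i
    using ca cb a b by (auto simp: lt_def)
  have lt_ne: "lt 1 \<noteq> lt 2" by (simp add: lt_def)
  have accd: "j \<ge> 1 \<Longrightarrow> Acc \<rho> i j - Acc \<rho> i (j-1) = \<rho> i j" for i j
    by (cases j) (auto simp: Acc_Suc)
  have ex: "m \<in> {1..length w} \<Longrightarrow> w!(m-1) = lt i \<Longrightarrow> i \<in> {1,2} \<Longrightarrow> \<exists>j\<in>{1..n}. m \<in> ?T i j" for m i
  proof -
    assume h: "m \<in> {1..length w}" "w!(m-1) = lt i" "i \<in> {1,2}"
    obtain j where "j\<in>{1..n}" "m \<in> blk (lt i) w (Acc \<rho> i (j-1)) (Acc \<rho> i j)"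
      using blk_exists[of m w "lt i" \<rho> i n] cnt_lt h by blast
    then show "\<exists>j\<in>{1..n}. m \<in> ?T i j" using h(3) by (auto simp: mkT_def cells2_iff)
  qed
  have s1: "\<forall>i j. (i,j) \<notin> cells2 n \<longrightarrow> ?T i j = {}" by (simp add: mkT_def)
  have s2: "\<forall>(i,j)\<in>cells2 n. finite (?T i j) \<and> card (?T i j) = \<rho> i j"
  proof (intro ballI, clarify)
    fix i j assume ij: "(i,j) \<in> cells2 n"
    then have "i \<in> {1,2}" "1 \<le> j" "j \<le> n" by (auto simp: cells2_iff)
    then have "Acc \<rho> i j \<le> count_list w (lt i)" using cnt_lt Acc_mono by simp
    then show "finite (?T i j) \<and> card (?T i j) = \<rho> i j"
      using ij blk_card accd \<open>1 \<le> j\<close> by (simp add: mkT_def blk_fin)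
  qed
  have s3: "\<forall>cc\<in>cells2 n. \<forall>d\<in>cells2 n. cc \<noteq> d \<longrightarrow>
         ?T (fst cc) (snd cc) \<inter> ?T (fst d) (snd d) = {}"
  proof (intro ballI impI)
    fix cc d assume cc: "cc \<in> cells2 n" and d: "d \<in> cells2 n" and ne: "cc \<noteq> d"
    obtain i j where [simp]: "cc = (i,j)" by (cases cc)
    obtain i' j' where [simp]: "d = (i',j')" by (cases d)
    show "?T (fst cc) (snd cc) \<inter> ?T (fst d) (snd d) = {}"
    proof (cases "i = i'")
      case False
      then have "lt i \<noteq> lt i'" using cc d by (auto simp: cells2_iff lt_def)
      then show ?thesis using cc d by (auto simp: mkT_def blk_def)
    next
      case True
      then have "j \<noteq> j'" using ne by simp
      then consider "j < j'" | "j' < j" by linarith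
      then show ?thesis
      proof cases
        case 1
        then have "Acc \<rho> i j \<le> Acc \<rho> i (j'-1)" by (intro Acc_mono) simp
        then show ?thesis using cc d True by (auto simp: mkT_def blk_def)
      next
        case 2
        then have "Acc \<rho> i j' \<le> Acc \<rho> i (j-1)" by (intro Acc_mono) simp
        then show ?thesis using cc d True by (auto simp: mkT_def blk_def)
      qed
    qed
  qed
  have s4: "(\<Union>(i,j)\<in>cells2 n. ?T i j) = {1..dsize n \<rho>}"
  proof
    show "(\<Union>(i,j)\<in>cells2 n. ?T i j) \<subseteq> {1..dsize n \<rho>}"
      using ds len by (auto simp: mkT_def blk_def)
    show "{1..dsize n \<rho>} \<subseteq> (\<Union>(i,j)\<in>cells2 n. ?T i j)"
    proof
      fix m assume m: "m \<in> {1..dsize n \<rho>}"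
      define i where "i = (if w!(m-1) = E then 1 else 2::nat)"
      have "w!(m-1) = lt i" unfolding i_def lt_def by (cases "w!(m-1)") auto
      moreover have "i \<in> {1,2}" by (simp add: i_def)
      ultimately obtain j where "j \<in> {1..n}" "m \<in> ?T i j" using ex[of m i] m ds len by auto
      then show "m \<in> (\<Union>(i,j)\<in>cells2 n. ?T i j)" using \<open>i \<in> {1,2}\<close>
        by (intro UN_I[of "(i,j)"]) (auto simp: cells2_iff)
    qed
  qed
  have s5: "\<forall>(i,j)\<in>cells2 n. (i, j+1) \<in> cells2 n \<longrightarrow>
         (\<forall>x\<in>?T i j. \<forall>y\<in>?T i (j+1). x < y)"
  proof (intro ballI impI, clarify)
    fix i j x y assume "(i,j) \<in> cells2 n" "(i,j+1) \<in> cells2 n" "x \<in> ?T i j" "y \<in> ?T i (j+1)"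
    then show "x < y" by (intro blk_ord[of x "lt i" w "Acc \<rho> i (j-1)" "Acc \<rho> i j" y "Acc \<rho> i j" "Acc \<rho> i (j+1)"])
       (auto simp: mkT_def)
  qed
  have s6: "\<forall>(i,j)\<in>cells2 n. (i+1, j) \<in> cells2 n \<longrightarrow>
         (\<forall>x\<in>?T i j. \<forall>y\<in>?T (i+1) j. x < y)"
  proof (intro ballI impI, clarify)
    fix i j x y assume ij: "(i,j) \<in> cells2 n" "(i+1,j) \<in> cells2 n" "x \<in> ?T i j" "y \<in> ?T (i+1) j"
    then have i1: "i = 1" and j: "j \<in> {1..n}" by (auto simp: cells2_iff)
    have x: "x \<in> blk E w (Acc \<rho> 1 (j-1)) (Acc \<rho> 1 j)" using ij i1 by (simp add: mkT_def lt_def)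
    have y: "y \<in> blk N w (Acc \<rho> 2 (j-1)) (Acc \<rho> 2 j)" using ij i1 by (simp add: mkT_def lt_def numeral_2_eq_2)
    have hy: "Acc \<rho> 1 j \<le> cnt E w y" using c y j unfolding Cond_def blk_def by auto
    show "x < y"
    proof (rule ccontr)
      assume "\<not> x < y"
      moreover have "x \<noteq> y" using x y by (auto simp: blk_def)
      ultimately have "y < x" by simp
      then have "cnt E w y < cnt E w x" using x y by (intro cnt_strict) (auto simp: blk_def)
      then show False using hy x by (auto simp: blk_def)
    qed
  qed
  have mem: "?T \<in> SVT2 n \<rho>" unfolding SVT2_def using s1 s2 s3 s4 s5 s6 by (intro CollectI conjI)
  have "psi n (a+b) ?T = w"
  proof (rule nth_equalityI)
    show "length (psi n (a+b) ?T) = length w" using len by (simp add: psi_def del: upt_Suc)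
    fix k assume "k < length (psi n (a+b) ?T)"
    then have k: "k < a + b" by (simp add: psi_def del: upt_Suc)
    have pk: "psi n (a+b) ?T ! k = (if \<exists>j\<in>{1..n}. Suc k \<in> ?T 1 j then E else N)"
      using k by (simp add: psi_def del: upt_Suc)
    show "psi n (a+b) ?T ! k = w ! k"
    proof (cases "w!k")
      case E
      then have "\<exists>j\<in>{1..n}. Suc k \<in> ?T 1 j" using ex[of "Suc k" 1] k len by (simp add: lt_def)
      then show ?thesis using pk E by simp
    next
      case N
      then have "\<not> (\<exists>j\<in>{1..n}. Suc k \<in> ?T 1 j)" by (auto simp: mkT_def blk_def lt_def)
      then show ?thesis using pk N by simp
    qed
  qed
  with mem show ?thesis by simp
qed

theorem lemma8:
  fixes n :: nat and \<rho> :: "nat \<Rightarrow> nat \<Rightarrow> nat" and P1 P2 :: "step list"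
  assumes "n \<ge> 1"
    and "\<forall>j\<in>{1..n}. \<rho> 1 j > 0 \<and> \<rho> 2 j > 0"
    and "a = (\<Sum>j=1..n. \<rho> 1 j)" and "b = (\<Sum>j=1..n. \<rho> 2 j)"
    and "P1 \<in> paths a b" and "P2 \<in> paths a b"
    and "weakly_above a P1 P2"
    and "P1 \<in> psi n (a + b) ` SVT2 n \<rho>"
  shows "P2 \<in> psi n (a + b) ` SVT2 n \<rho>"
proof -
  have a: "a = Acc \<rho> 1 n" and b: "b = Acc \<rho> 2 n" using assms(3,4) by (simp_all add: Acc_def)
  obtain T1 where T1: "T1 \<in> SVT2 n \<rho>" "P1 = psi n (a+b) T1" using assms(8) by blast
  have ds: "dsize n \<rho> = a + b" using a b by (simp add: dsize_eq)
  have "Cond n \<rho> P1" using partA[OF T1(1) assms(2)] T1(2) ds by simp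
  then have c2: "Cond n \<rho> P2" using transfer[OF assms(5,6,7)] a by simp
  show ?thesis using partB[OF assms(6) a b c2] by (intro image_eqI[of _ _ "mkT n \<rho> P2"]) auto
qed

end
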